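(* Let $k\ge1$, let $n_k\in\{0,1\}^k$, and let $\eta=\alpha\circ\tau_{n_k}\colon\Sigma\to\Sigma$. Then: (i) $\eta$ is continuous; (ii) $\underline0$ is a periodic point of $\eta$ of period $2^k$, and its $\eta$-orbit intersects the cylinder $\Sigma_{n_k}$ in exactly one point, namely $n_k\underline0$; (iii) every point $\underline n\in B$ is $\eta$-periodic; either it is a $2^k$-periodic point lying in the $\eta$-orbit of $\underline0$, or it is an $m\cdot2^k$-periodic point of $\eta$ for some positive integer $m$.
   Context: $\Sigma=\{0,1\}^{\mathbb N}$ with the product topology. For a $k$-block $n_k\in\{0,1\}^k$, the cylinder $\Sigma_{n_k}$ is the set of sequences beginning with $n_k$; $n_k\underline0$ denotes the concatenation of $n_k$ with the constant sequence $\underline0=000\dots$, and $\underline1=111\dots$. $B$ is the set of sequences that are eventually constant (eventually all $0$ or eventually all $1$). The adding machine $\alpha\colon\Sigma\to\Sigma$ adds $1\underline0=1000\dots$ with carry to the right (the first coordinate being least significant), i.e. $\alpha(x)=x+1\underline0$ in the 2-adic integers; e.g. $\underline1\mapsto\underline0\mapsto1\underline0\mapsto01\underline0\mapsto11\underline0$. $\tau_{n_k}\colon\Sigma\to\Sigma$ is the identity on sequences not in $\Sigma_{n_k}$, and on $\Sigma_{n_k}$ keeps the first $k$ symbols and swaps $0\leftrightarrow1$ in all remaining coordinates, e.g. $\tau_{n_k}(n_k110100\dots)=n_k001011\dots$. *)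

theory Defs
  imports "HOL-Analysis.Analysis"
begin

text \<open>Sigma = {0,1}^N is modelled as nat => bool (True = 1, False = 0),
  coordinate 0 being the first (least significant) one.\<close>

type_synonym seq = "nat \<Rightarrow> bool"

definition Sigma_top :: "seq topology" where
  "Sigma_top = product_topology (\<lambda>_. discrete_topology (UNIV :: bool set)) UNIV"

text \<open>Adding machine: add 1000... with carry to the right.
  Coordinate i flips iff all earlier coordinates are 1.\<close>
definition adding_machine :: "seq \<Rightarrow> seq" where
  "adding_machine x = (\<lambda>i. if (\<forall>j<i. x j) then \<not> x i else x i)"

definition cylinder :: "bool list \<Rightarrow> seq set" where
  "cylinder w = {x. \<forall>i<length w. x i = w ! i}"

definition conc_const :: "bool list \<Rightarrow> bool \<Rightarrow> seq" where
  "conc_const w c = (\<lambda>i. if i < length w then w ! i else c)"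

definition tau :: "bool list \<Rightarrow> seq \<Rightarrow> seq" where
  "tau w x = (if x \<in> cylinder w then (\<lambda>i. if i < length w then x i else \<not> x i) else x)"

definition B_set :: "seq set" where
  "B_set = {x. \<exists>N c. \<forall>i\<ge>N. x i = c}"

definition periodic_of_period :: "('a \<Rightarrow> 'a) \<Rightarrow> nat \<Rightarrow> 'a \<Rightarrow> bool" where
  "periodic_of_period f p x \<longleftrightarrow> 0 < p \<and> (f ^^ p) x = x \<and> (\<forall>q. 0 < q \<and> q < p \<longrightarrow> (f ^^ q) x \<noteq> x)"

definition periodic_point :: "('a \<Rightarrow> 'a) \<Rightarrow> 'a \<Rightarrow> bool" where
  "periodic_point f x \<longleftrightarrow> (\<exists>p>0. (f ^^ p) x = x)"

definition orbit :: "('a \<Rightarrow> 'a) \<Rightarrow> 'a \<Rightarrow> 'a set" where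
  "orbit f x = {(f ^^ j) x | j. True}"

end

theory Submission
  imports Defs
begin


fun succl :: "bool list \<Rightarrow> bool list" where
  "succl [] = []"
| "succl (b#bs) = (if b then False # succl bs else True # bs)"

fun vall :: "bool list \<Rightarrow> nat" where
  "vall [] = 0"
| "vall (b#bs) = of_bool b + 2 * vall bs"

definition conc :: "bool list \<Rightarrow> seq \<Rightarrow> seq" where
  "conc l y = (\<lambda>i. if i < length l then l!i else y (i - length l))"

definition scons :: "bool \<Rightarrow> seq \<Rightarrow> seq" where
  "scons b x = (\<lambda>i. case i of 0 \<Rightarrow> b | Suc j \<Rightarrow> x j)"

definition negs :: "seq \<Rightarrow> seq" where
  "negs y = (\<lambda>i. \<not> y i)"

lemma length_succl[simp]: "length (succl l) = length l"
  by (induction l) auto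

lemma vall_less: "vall l < 2 ^ length l"
  by (induction l) auto

lemma vall_succl: "vall (succl l) = (vall l + 1) mod 2 ^ length l"
proof (induction l)
  case Nil then show ?case by simp
next
  case (Cons b bs)
  show ?case
  proof (cases b)
    case True
    then have "vall (succl (b#bs)) = 2 * ((vall bs + 1) mod 2 ^ length bs)" using Cons by simp
    also have "\<dots> = (2 * vall bs + 2) mod (2 * 2 ^ length bs)" by (simp add: mult_mod_right)
    finally show ?thesis using True by simp
  next
    case False
    have "2 * vall bs + 1 < 2 * 2 ^ length bs" using vall_less[of bs] by simp
    then show ?thesis using False by simp
  qed
qed

lemma vall_inj: "length l = length l' \<Longrightarrow> vall l = vall l' \<Longrightarrow> l = l'"
proof (induction l arbitrary: l')
  case Nil then show ?case by simp
next
  case (Cons b bs)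
  then obtain b' bs' where l': "l' = b' # bs'" by (cases l') auto
  have "of_bool b + 2 * vall bs = of_bool b' + 2 * vall bs'" using Cons l' by simp
  then have "b = b'" "vall bs = vall bs'" by (cases b; cases b'; simp; presburger)+
  then show ?case using Cons l' by simp
qed

lemma all_iff: "list_all id l \<longleftrightarrow> vall l = 2 ^ length l - 1"
proof (induction l)
  case Nil then show ?case by simp
next
  case (Cons b bs)
  have p: "(2::nat) ^ length bs \<ge> 1" by simp
  show ?case
  proof (cases b)
    case True
    obtain n where "(2::nat) ^ length bs = Suc n" using p not0_implies_Suc by fastforce
    then have "Suc (2 * (2 ^ length bs - Suc 0)) = 2 * 2 ^ length bs - Suc 0" by simp
    then show ?thesis using Cons p True by auto
  next
    case False
    have "2 * vall bs \<noteq> 2 * 2 ^ length bs - 1" using p by presburger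
    then show ?thesis using False by simp
  qed
qed

lemma am_scons: "adding_machine (scons b x) = (if b then scons False (adding_machine x) else scons True x)"
  proof
  fix i show "adding_machine (scons b x) i = (if b then scons False (adding_machine x) else scons True x) i"
    by (cases i) (auto simp: adding_machine_def scons_def All_less_Suc2)
qed

lemma conc_Cons: "conc (b#l) y = scons b (conc l y)"
  proof
  fix i show "conc (b#l) y i = scons b (conc l y) i"
    by (cases i) (auto simp: conc_def scons_def)
qed

lemma conc_Nil[simp]: "conc [] y = y"
  by (simp add: conc_def)

lemma am_conc: "adding_machine (conc l y) = conc (succl l) (if list_all id l then adding_machine y else y)"
  by (induction l) (auto simp: conc_Cons am_scons)

lemma conc_inj: assumes "length l = length l'" "conc l y = conc l' y'" shows "l = l' \<and> y = y'"
proof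
  show "l = l'"
  proof (rule nth_equalityI)
    fix i assume "i < length l"
    then show "l ! i = l' ! i" using fun_cong[OF assms(2), of i] assms(1) by (simp add: conc_def)
  qed (use assms in simp)
  show "y = y'"
  proof
    fix i show "y i = y' i" using fun_cong[OF assms(2), of "i + length l"] assms(1) by (simp add: conc_def)
  qed
qed

lemma conc_cyl: "length l = length w \<Longrightarrow> (conc l y \<in> cylinder w) \<longleftrightarrow> l = w"
  by (auto simp: cylinder_def conc_def list_eq_iff_nth_eq)

lemma tau_conc: assumes that: "length l = length w" shows "tau w (conc l y) = conc l (if l = w then negs y else y)"
  proof (cases "l = w")
  case True
  have "conc l y \<in> cylinder w" using conc_cyl[OF that] True by simp
  then show ?thesis using True by (simp add: tau_def) (auto simp: conc_def negs_def)
next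
  case False then show ?thesis by (simp add: tau_def conc_cyl[OF that])
qed

lemma decomp: "x = conc (map x [0..<k]) (\<lambda>i. x (i + k))"
  by (auto simp: conc_def)

lemma key: "adding_machine (negs (adding_machine z)) = negs z"
proof
  fix i
  show "adding_machine (negs (adding_machine z)) i = negs z i"
  proof (cases "\<forall>j<i. z j")
    case True
    then have "\<forall>j<i. negs (adding_machine z) j"
      by (auto simp: negs_def adding_machine_def)
    then show ?thesis using True by (simp add: adding_machine_def negs_def)
  next
    case False
    define j0 where "j0 = (LEAST j. \<not> z j)"
    have "\<not> z j0" unfolding j0_def by (metis (mono_tags) False LeastI)
    moreover have "j0 < i" unfolding j0_def by (metis False Least_le le_less_trans)
    moreover have "\<forall>j<j0. z j" unfolding j0_def using not_less_Least by blast
    ultimately have "\<not> negs (adding_machine z) j0" by (simp add: negs_def adding_machine_def)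
    then have "\<not> (\<forall>j<i. negs (adding_machine z) j)" using \<open>j0 < i\<close> by blast
    then show ?thesis using False by (simp add: adding_machine_def negs_def)
  qed
qed



definition eta :: "bool list \<Rightarrow> seq \<Rightarrow> seq" where
  "eta w = adding_machine \<circ> tau w"

definition Pg :: "nat \<Rightarrow> nat \<Rightarrow> nat \<Rightarrow> nat \<Rightarrow> seq \<Rightarrow> seq" where
  "Pg nw tp a b y = (if a \<le> tp \<and> tp < b then adding_machine else id)
      ((if a \<le> nw \<and> nw < b then negs else id) y)"

lemma eta_conc: "length l = length w \<Longrightarrow> eta w (conc l y) =
  conc (succl l) ((if list_all id l then adding_machine else id) (if l = w then negs y else y))"
  by (simp add: eta_def tau_conc am_conc)

lemma funpow_succl: "length ((succl ^^ j) l) = length l \<and> vall ((succl ^^ j) l) = (vall l + j) mod 2 ^ length l"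
proof (induction j)
  case 0 then show ?case using vall_less[of l] by simp
next
  case (Suc j)
  then show ?case by (simp add: vall_succl mod_Suc_eq)
qed

lemma eta_iter_ex: "length l = length w \<Longrightarrow> \<exists>z. (eta w ^^ j) (conc l y) = conc ((succl ^^ j) l) z"
proof (induction j)
  case 0 then show ?case by auto
next
  case (Suc j)
  then obtain z where "(eta w ^^ j) (conc l y) = conc ((succl ^^ j) l) z" by auto
  moreover have "length ((succl ^^ j) l) = length w" using funpow_succl Suc.prems by metis
  ultimately show ?case by (simp add: eta_conc del: id_apply) blast
qed

lemma P_step: "nw \<le> tp \<Longrightarrow> a \<le> b \<Longrightarrow> b \<le> tp \<Longrightarrow>
  (if b = tp then adding_machine else id)((if b = nw then negs else id)(Pg nw tp a b y)) = Pg nw tp a (Suc b) y"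
  by (auto simp: Pg_def)

lemma eta_iter: assumes "length l = length w" "vall l + j \<le> 2 ^ length w"
  shows "(eta w ^^ j) (conc l y) = conc ((succl ^^ j) l) (Pg (vall w) (2 ^ length w - 1) (vall l) (vall l + j) y)"
  using assms(2)
proof (induction j)
  case 0 then show ?case by (auto simp: Pg_def)
next
  case (Suc j)
  define l' where "l' = (succl ^^ j) l"
  have len: "length l' = length w" using funpow_succl assms(1) l'_def by metis
  have v: "vall l' = vall l + j" using funpow_succl[of j l] Suc.prems assms(1) l'_def by simp
  have a1: "list_all id l' \<longleftrightarrow> vall l + j = 2 ^ length w - 1" using all_iff[of l'] len v by simp
  have a2: "l' = w \<longleftrightarrow> vall l + j = vall w" using vall_inj[OF len] v by auto
  have nw: "vall w \<le> 2 ^ length w - 1" using vall_less[of w] by simp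
  have "(eta w ^^ Suc j) (conc l y) = eta w (conc l' (Pg (vall w) (2 ^ length w - 1) (vall l) (vall l + j) y))"
    using Suc l'_def by simp
  also have "\<dots> = conc (succl l') (Pg (vall w) (2 ^ length w - 1) (vall l) (Suc (vall l + j)) y)"
  proof -
    let ?Z = "Pg (vall w) (2 ^ length w - 1) (vall l) (vall l + j) y"
    have b: "vall l + j \<le> 2 ^ length w - 1" using Suc.prems by simp
    have "(if l' = w then negs ?Z else ?Z) = (if vall l + j = vall w then negs else id) ?Z" using a2 by simp
    moreover have "(if list_all id l' then adding_machine else id) = (if vall l + j = 2 ^ length w - 1 then adding_machine else id)"
      using a1 by simp
    ultimately show ?thesis unfolding eta_conc[OF len]
      using P_step[OF nw, of "vall l" "vall l + j" y] b by simp
  qed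
  finally show ?case by (simp add: l'_def)
qed

lemma eta_full: assumes "length l = length w"
  shows "(eta w ^^ (2 ^ length w)) (conc l y) =
    conc l (Pg (vall w) (2 ^ length w - 1) 0 (vall l) (Pg (vall w) (2 ^ length w - 1) (vall l) (2 ^ length w) y))"
proof -
  let ?N = "2 ^ length w" and ?a = "vall l"
  have al: "?a < ?N" using vall_less[of l] assms by simp
  define l1 where "l1 = (succl ^^ (?N - ?a)) l"
  have len1: "length l1 = length w" and v1: "vall l1 = 0"
    using funpow_succl[of "?N - ?a" l] assms al l1_def by auto
  have e1: "(eta w ^^ (?N - ?a)) (conc l y) = conc l1 (Pg (vall w) (?N - 1) ?a ?N y)"
    using eta_iter[OF assms, of "?N - ?a" y] al l1_def by simp
  have l2: "(succl ^^ ?a) l1 = l"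
    using funpow_succl[of ?a l1] len1 v1 al assms vall_inj by (metis add_0 mod_less)
  have e2: "(eta w ^^ ?a) (conc l1 z) = conc l (Pg (vall w) (?N - 1) 0 ?a z)" for z
    using eta_iter[OF len1, of ?a z] v1 al l2 by simp
  have "?N = ?a + (?N - ?a)" using al by simp
  then have "(eta w ^^ ?N) = (eta w ^^ ?a) \<circ> (eta w ^^ (?N - ?a))" by (metis funpow_add)
  then show ?thesis using e1 e2 by simp
qed

lemma invol: assumes "a < N" "nw < N"
  shows "Pg nw (N - 1) 0 a (Pg nw (N - 1) a N (Pg nw (N - 1) 0 a (Pg nw (N - 1) a N y))) = y"
proof (cases "a \<le> nw")
  case True
  then have "Pg nw (N - 1) 0 a (Pg nw (N - 1) a N z) = adding_machine (negs z)" for z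
    using assms by (auto simp: Pg_def)
  then show ?thesis using key[of "negs y"] by (simp add: negs_def)
next
  case False
  then have "Pg nw (N - 1) 0 a (Pg nw (N - 1) a N z) = negs (adding_machine z)" for z
    using assms by (auto simp: Pg_def)
  then show ?thesis using key[of y] by (simp add: negs_def)
qed

lemma decomp_ex: "\<exists>l y. length l = length w \<and> x = conc l y"
  using decomp[of x "length w"] by (metis length_map diff_zero length_upt)

lemma eta_double: "(eta w ^^ (2 ^ length w)) ((eta w ^^ (2 ^ length w)) x) = x"
proof -
  obtain l y where len: "length l = length w" and x: "x = conc l y" using decomp_ex by blast
  have a: "vall l < 2 ^ length w" using vall_less[of l] len by simp
  have b: "vall w < 2 ^ length w" using vall_less[of w] by simp
  show ?thesis unfolding x eta_full[OF len] using invol[OF a b] by simp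
qed

lemma mod_lemma: assumes "(a::nat) < m" "(a + q) mod m = a" shows "m dvd q"
proof -
  have m: "m > 0" using assms by simp
  have r: "q mod m < m" using m by simp
  have e: "(a + q mod m) mod m = a" using assms(2) by (simp add: mod_add_right_eq)
  show ?thesis
  proof (cases "a + q mod m < m")
    case True then show ?thesis using e by (simp add: mod_eq_0_iff_dvd[symmetric])
  next
    case False
    have "(a + q mod m) mod m = (a + q mod m - m) mod m" using False by (simp add: le_mod_geq)
    also have "\<dots> = a + q mod m - m" using r assms(1) by (intro mod_less) linarith
    finally have "(a + q mod m) mod m = a + q mod m - m" .
    then show ?thesis using e r False by simp
  qed
qed

lemma eta_dvd: assumes "(eta w ^^ q) x = x" shows "2 ^ length w dvd q"
proof -
  obtain l y where len: "length l = length w" and x: "x = conc l y" using decomp_ex by blast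
  obtain z where "(eta w ^^ q) (conc l y) = conc ((succl ^^ q) l) z" using eta_iter_ex[OF len] by blast
  then have "conc ((succl ^^ q) l) z = conc l y" using assms x by simp
  moreover have "length ((succl ^^ q) l) = length l" using funpow_succl by blast
  ultimately have "(succl ^^ q) l = l" using conc_inj by blast
  then have "(vall l + q) mod 2 ^ length w = vall l" using funpow_succl[of q l] len by simp
  then show ?thesis using mod_lemma[of "vall l" "2 ^ length w" q] vall_less[of l] len by simp
qed



lemma cont_local:
  assumes "\<And>i. \<exists>N. \<forall>x y. (\<forall>j<N. x j = y j) \<longrightarrow> f x i = f y i"
  shows "continuous_map Sigma_top Sigma_top f"
  unfolding Sigma_top_def continuous_map_componentwise_UNIV
proof
  fix i
  obtain N where N: "\<And>x y. (\<forall>j<N. x j = y j) \<Longrightarrow> f x i = f y i" using assms by blast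
  let ?P = "product_topology (\<lambda>_. discrete_topology (UNIV::bool set)) (UNIV::nat set)"
  show "continuous_map ?P (discrete_topology UNIV) (\<lambda>x. f x i)"
    unfolding continuous_map_openin_preimage_eq
  proof (intro conjI allI impI)
    show "(\<lambda>x. f x i) \<in> topspace ?P \<rightarrow> topspace (discrete_topology UNIV)" by simp
    fix U :: "bool set"
    show "openin ?P (topspace ?P \<inter> (\<lambda>x. f x i) -` U)"
    proof (subst openin_subopen, intro ballI)
      fix x assume x: "x \<in> topspace ?P \<inter> (\<lambda>x. f x i) -` U"
      let ?T = "PiE UNIV (\<lambda>j. if j < N then {x j} else UNIV)"
      show "\<exists>T. openin ?P T \<and> x \<in> T \<and> T \<subseteq> topspace ?P \<inter> (\<lambda>x. f x i) -` U"
      proof (intro exI conjI)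
        have "{j. (if j < N then {x j} else UNIV) \<noteq> topspace (discrete_topology (UNIV::bool set))} \<subseteq> {..<N}"
          by auto
        then show "openin ?P ?T"
          by (intro product_topology_basis) (auto intro: finite_subset)
        show "x \<in> ?T" by (auto simp: PiE_iff)
        show "?T \<subseteq> topspace ?P \<inter> (\<lambda>x. f x i) -` U"
        proof
          fix y assume "y \<in> ?T"
          then have "\<forall>j<N. x j = y j" by (auto simp: PiE_iff split: if_splits)
          then have "f y i = f x i" using N by metis
          then show "y \<in> topspace ?P \<inter> (\<lambda>x. f x i) -` U" using x by simp
        qed
      qed
    qed
  qed
qed

lemma eta_local: "\<exists>N. \<forall>x y. (\<forall>j<N. x j = y j) \<longrightarrow> eta w x i = eta w y i"
proof (intro exI allI impI)
  fix x y :: seq assume h: "\<forall>j<Suc i + length w. x j = y j"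
  have c: "x \<in> cylinder w \<longleftrightarrow> y \<in> cylinder w" using h by (auto simp: cylinder_def)
  have t: "tau w x j = tau w y j" if "j \<le> i" for j
    using h c that by (auto simp: tau_def)
  show "eta w x i = eta w y i"
    unfolding eta_def comp_def adding_machine_def using t by auto
qed

lemma vall_rep[simp]: "vall (replicate n False) = 0"
  by (induction n) auto

lemma funpow_mult_fix: "(f ^^ N) x = x \<Longrightarrow> (f ^^ (N * n)) x = x"
proof (induction n)
  case 0 then show ?case by simp
next
  case (Suc n)
  have "N * Suc n = N + N * n" by simp
  then show ?case using Suc by (simp only: funpow_add comp_def)
qed

lemma funpow_mod: "(f ^^ N) x = x \<Longrightarrow> (f ^^ j) x = (f ^^ (j mod N)) x"
proof -
  assume a: "(f ^^ N) x = x"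
  have "j = j mod N + N * (j div N)" by simp
  then have "(f ^^ j) x = (f ^^ (j mod N)) ((f ^^ (N * (j div N))) x)"
    by (metis funpow_add comp_apply)
  then show ?thesis using funpow_mult_fix[OF a] by simp
qed



theorem mainTheorem4:
  fixes w :: "bool list" and k :: nat and \<eta> :: "seq \<Rightarrow> seq"
  assumes "k \<ge> 1" and "length w = k"
    and "\<eta> = adding_machine \<circ> tau w"
  shows "continuous_map Sigma_top Sigma_top \<eta>
    \<and> periodic_of_period \<eta> (2 ^ k) (\<lambda>_. False)
    \<and> orbit \<eta> (\<lambda>_. False) \<inter> cylinder w = {conc_const w False}
    \<and> (\<forall>x \<in> B_set. periodic_point \<eta> x
         \<and> ((periodic_of_period \<eta> (2 ^ k) x \<and> x \<in> orbit \<eta> (\<lambda>_. False))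
            \<or> (\<exists>m::nat. m > 0 \<and> periodic_of_period \<eta> (m * 2 ^ k) x)))"
proof -
  have e: "\<eta> = eta w" using assms(3) by (simp add: eta_def)
  define N where "N = (2::nat) ^ k"
  have Nk: "N = 2 ^ length w" using assms(2) N_def by simp
  have Npos: "N > 0" using N_def by simp
  define z0 :: seq where "z0 = (\<lambda>_. False)"
  define l0 where "l0 = replicate k False"
  have lenl0: "length l0 = length w" using assms(2) l0_def by simp
  have z0c: "z0 = conc l0 z0" by (auto simp: z0_def conc_def l0_def)
  have nw: "vall w < N" using vall_less[of w] Nk by simp
  have C: "continuous_map Sigma_top Sigma_top \<eta>"
    unfolding e by (rule cont_local) (rule eta_local)
  have am0: "adding_machine (negs z0) = z0"
    by (auto simp: adding_machine_def negs_def z0_def)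
  have fix0: "(\<eta> ^^ N) z0 = z0"
  proof -
    have "(\<eta> ^^ N) z0 = (eta w ^^ 2 ^ length w) (conc l0 z0)" using e Nk z0c by simp
    also have "\<dots> = conc l0 (Pg (vall w) (N - 1) 0 0 (Pg (vall w) (N - 1) 0 N z0))"
      using eta_full[OF lenl0, of z0] Nk l0_def by simp
    also have "\<dots> = conc l0 z0" using nw Npos am0 by (simp add: Pg_def)
    finally show ?thesis using z0c by simp
  qed
  have dv: "\<And>q x. (\<eta> ^^ q) x = x \<Longrightarrow> N dvd q" using eta_dvd e Nk by blast
  have P0: "periodic_of_period \<eta> N z0"
    unfolding periodic_of_period_def using fix0 Npos dv
    by (meson nat_dvd_not_less)
  have it: "(\<eta> ^^ j) z0 = conc ((succl ^^ j) l0) (Pg (vall w) (N - 1) 0 j z0)" if "j \<le> N" for j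
    using eta_iter[OF lenl0, of j z0] that e Nk z0c l0_def by simp
  have O: "orbit \<eta> z0 \<inter> cylinder w = {conc_const w False}"
  proof
    show "orbit \<eta> z0 \<inter> cylinder w \<subseteq> {conc_const w False}"
    proof
      fix x assume "x \<in> orbit \<eta> z0 \<inter> cylinder w"
      then obtain j where xj: "x = (\<eta> ^^ j) z0" and xc: "x \<in> cylinder w" by (auto simp: orbit_def)
      define j' where "j' = j mod N"
      have j': "j' < N" using Npos j'_def by simp
      have x': "x = conc ((succl ^^ j') l0) (Pg (vall w) (N - 1) 0 j' z0)"
        using xj funpow_mod[OF fix0, of j] it[of j'] j' j'_def by simp
      have len': "length ((succl ^^ j') l0) = length w" using funpow_succl lenl0 by metis
      have sw: "(succl ^^ j') l0 = w" using conc_cyl[OF len'] xc x' by simp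
      have "vall ((succl ^^ j') l0) = j'" using funpow_succl[of j' l0] lenl0 Nk j' l0_def by simp
      then have "vall w = j'" using sw by simp
      then have "Pg (vall w) (N - 1) 0 j' z0 = z0" using nw by (auto simp: Pg_def)
      then have "x = conc w z0" using x' sw by simp
      then show "x \<in> {conc_const w False}" by (simp add: conc_def conc_const_def z0_def)
    qed
    show "{conc_const w False} \<subseteq> orbit \<eta> z0 \<inter> cylinder w"
    proof -
      let ?j = "vall w"
      have len': "length ((succl ^^ ?j) l0) = length w" using funpow_succl lenl0 by metis
      have "vall ((succl ^^ ?j) l0) = ?j" using funpow_succl[of ?j l0] lenl0 Nk nw l0_def by simp
      then have sw: "(succl ^^ ?j) l0 = w" using vall_inj[OF len'] by simp
      have "Pg (vall w) (N - 1) 0 ?j z0 = z0" using nw by (auto simp: Pg_def)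
      then have "(\<eta> ^^ ?j) z0 = conc w z0" using it[of ?j] nw sw by simp
      moreover have "conc w z0 = conc_const w False" by (simp add: conc_def conc_const_def z0_def)
      moreover have "conc w z0 \<in> cylinder w" using conc_cyl[of w w z0] by simp
      ultimately show ?thesis by (auto simp: orbit_def) (metis)
    qed
  qed
  have D: "periodic_point \<eta> x \<and> (\<exists>m::nat. m > 0 \<and> periodic_of_period \<eta> (m * N) x)" for x
  proof -
    have f2: "(\<eta> ^^ (N + N)) x = x" using eta_double[of w x] e Nk by (simp add: funpow_add)
    define p where "p = (LEAST q. 0 < q \<and> (\<eta> ^^ q) x = x)"
    have ex: "0 < N + N \<and> (\<eta> ^^ (N + N)) x = x" using f2 Npos by simp
    have pp: "0 < p \<and> (\<eta> ^^ p) x = x" unfolding p_def by (rule LeastI[of _ "N + N"]) (rule ex)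
    have pm: "\<forall>q. 0 < q \<and> q < p \<longrightarrow> (\<eta> ^^ q) x \<noteq> x"
      unfolding p_def using not_less_Least by blast
    have "N dvd p" using dv pp by blast
    then obtain m where pm': "p = m * N" by (metis dvd_def mult.commute)
    then have "m > 0" using pp by (cases m) auto
    moreover have "periodic_of_period \<eta> (m * N) x"
      unfolding periodic_of_period_def using pp pm pm' by simp
    ultimately show ?thesis using ex unfolding periodic_point_def by blast
  qed
  show ?thesis using C P0 O D unfolding N_def z0_def by blast
qed

end
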